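(* Let $G=(\mathcal{V},\mathcal{E})$ be a finite graph with $C\ge 2$ classes, in which every node $i$ has a true label $y_i\in\{1,\dots,C\}$ and degree $deg(i)\ge 1$; write $\mathcal{N}(i)$ for the set of neighbours of $i$. Each node $j$ carries a label vector $\hat{\mathbf{y}}_j\in[0,1]^C$ (the ground-truth one-hot label if $j$ is labeled, otherwise a model-predicted pseudo-label), and assume: (4) $\mathbb{E}[\hat{\mathbf{y}}_j\mid y_j]=(1-\epsilon)\mathbf{e}_{y_j}+\frac{\epsilon}{C-1}\sum_{k\ne y_j}\mathbf{e}_k$ for some $\epsilon\in(0,1)$, the vectors $\hat{\mathbf{y}}_j$ of distinct nodes being independent given the labels; (5) given $y_i$, the labels $\{y_j: j\in\mathcal{N}(i)\}$ of the neighbours of $i$ are conditionally independent, each equal to $y_i$ with probability $p$ and equal to any given class $c\ne y_i$ with probability $(1-p)/(C-1)$. Define the mixed label of node $i$ after one Mixup operation by $\bar{\mathbf{y}}_i=\sum_{j\in\mathcal{N}(i)}\frac{1}{deg(i)}\hat{\mathbf{y}}_j$. Then for any class $c$ and any node $i\in\mathcal{V}$ with $y_i=c$ (expectations and probabilities conditional on $y_i$), $$\mathbb{E}[\bar{\mathbf{y}}_i]=\Big[p(1-\epsilon)+\frac{\epsilon(1-p)}{C-1}\Big]\mathbf{e}_c+\Big[\frac{p\epsilon+(1-p)(1-\epsilon)}{C-1}+\frac{\epsilon(1-p)(C-2)}{(C-1)^2}\Big]\sum_{j\ne c}\mathbf{e}_j,$$ and for every $t>0$, $$\mathbb{P}\big(\|\bar{\mathbf{y}}_i-\mathbb{E}[\bar{\mathbf{y}}_i]\|_2\ge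 t\big)\le 2C\exp\!\Big(-\frac{deg(i)\,t^2}{2C}\Big).$$
   Context: $\mathbf{e}_c$ denotes the $c$-th standard basis vector of $\mathbb{R}^C$. The Mixup operation replaces a node's label vector by the average of its neighbours' label vectors. *)

theory Defs
  imports "HOL-Probability.Probability"
begin

definition nbrs :: "'v set \<Rightarrow> ('v \<Rightarrow> 'v \<Rightarrow> bool) \<Rightarrow> 'v \<Rightarrow> 'v set" where
  "nbrs V E i = {j \<in> V. E i j}"

definition deg :: "'v set \<Rightarrow> ('v \<Rightarrow> 'v \<Rightarrow> bool) \<Rightarrow> 'v \<Rightarrow> nat" where
  "deg V E i = card (nbrs V E i)"

definition basis_e :: "'c::finite \<Rightarrow> real ^ 'c" where
  "basis_e c = axis c 1"

definition cond_exp_given :: "'a measure \<Rightarrow> ('a \<Rightarrow> real ^ 'c::finite) \<Rightarrow> ('a \<Rightarrow> 'b) \<Rightarrow> 'b \<Rightarrow> real ^ 'c" where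
  "cond_exp_given M X Y k =
     (1 / measure M {\<omega> \<in> space M. Y \<omega> = k}) *\<^sub>R
     (\<integral>\<omega>. indicator {\<omega> \<in> space M. Y \<omega> = k} \<omega> *\<^sub>R X \<omega> \<partial>M)"

definition mixup :: "'v set \<Rightarrow> ('v \<Rightarrow> 'v \<Rightarrow> bool) \<Rightarrow> ('v \<Rightarrow> 'a \<Rightarrow> real ^ 'c::finite) \<Rightarrow> 'v \<Rightarrow> 'a \<Rightarrow> real ^ 'c" where
  "mixup V E Yhat i \<omega> = (\<Sum>j\<in>nbrs V E i. (1 / real (deg V E i)) *\<^sub>R Yhat j \<omega>)"

end

theory Submission
  imports Defs
begin

lemma aux1: "(D::real) \<noteq> 0 \<Longrightarrow> e / D + p * (1 - e - e / D) = p * (1 - e) + e * (1 - p) / D"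
  by (simp add: field_simps)

lemma aux2: "(D::real) \<noteq> 0 \<Longrightarrow> e / D + (1 - p) / D * (1 - e - e / D) = (p * e + (1 - p) * (1 - e)) / D + e * (1 - p) * (D - 1) / D^2"
  by (simp add: field_simps power2_eq_square)

lemma aux3: "(n::real) > 0 \<Longrightarrow> \<bar>S - n * w\<bar> < n * s \<Longrightarrow> \<bar>1 / n * S - w\<bar> < s"
proof -
  assume n: "n > 0" and h: "\<bar>S - n * w\<bar> < n * s"
  have "1 / n * S - w = (S - n * w) / n" using n by (simp add: field_simps)
  then have "\<bar>1 / n * S - w\<bar> = \<bar>S - n * w\<bar> / n" using n by (simp add: abs_divide)
  also have "\<dots> < s" using n h by (simp add: divide_less_eq mult.commute)
  finally show ?thesis .
qed

lemma aux4: "(X::real) \<ge> 0 \<Longrightarrow> C > 0 \<Longrightarrow> -2 * X / C \<le> - X / (2 * C)"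
  by (simp add: field_simps)

lemma norm_lt_cart:
  fixes x :: "real ^ 'c::finite"
  assumes "\<And>k. \<bar>x $ k\<bar> < s"
  shows "norm x < s * sqrt (real CARD('c))"
proof -
  have s0: "s > 0" using assms[of undefined] by linarith
  have "(\<Sum>k\<in>UNIV. (x $ k)^2) < (\<Sum>k\<in>(UNIV::'c set). s^2)"
  proof (rule sum_strict_mono)
    fix k :: 'c
    have "\<bar>x $ k\<bar>^2 < s^2" using assms[of k] by (intro power_strict_mono) auto
    then show "(x $ k)^2 < s^2" by simp
  qed auto
  then have "norm x < sqrt (real CARD('c) * s^2)"
    unfolding norm_vec_def L2_set_def by (simp add: real_sqrt_less_mono)
  also have "\<dots> = s * sqrt (real CARD('c))" using s0 by (simp add: real_sqrt_mult)
  finally show ?thesis .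
qed

theorem theorem2:
  fixes M :: "'a measure"
    and V :: "'v set" and E :: "'v \<Rightarrow> 'v \<Rightarrow> bool"
    and Y :: "'v \<Rightarrow> 'a \<Rightarrow> 'c::finite"
    and Yhat :: "'v \<Rightarrow> 'a \<Rightarrow> real ^ 'c"
    and \<epsilon> p :: real and i :: 'v and c :: 'c
  assumes C2: "CARD('c) \<ge> 2"
    and finV: "finite V"
    and sym: "\<And>u w. E u w \<Longrightarrow> E w u"
    and irrefl: "\<And>u. \<not> E u u"
    and deg_pos: "\<And>u. u \<in> V \<Longrightarrow> deg V E u \<ge> 1"
    and iV: "i \<in> V"
    and P: "prob_space M"
    and yi: "\<And>\<omega>. \<omega> \<in> space M \<Longrightarrow> Y i \<omega> = c"
    and Yhat_range: "\<And>j \<omega> k. j \<in> V \<Longrightarrow> \<omega> \<in> space M \<Longrightarrow> Yhat j \<omega> $ k \<in> {0..1}"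
    and eps: "0 < \<epsilon>" "\<epsilon> < 1"
    and p: "0 \<le> p" "p \<le> 1"
    and indep: "prob_space.indep_vars M (\<lambda>_. count_space UNIV \<Otimes>\<^sub>M borel)
                  (\<lambda>j \<omega>. (Y j \<omega>, Yhat j \<omega>)) (nbrs V E i)"
    and label_same: "\<And>j. j \<in> nbrs V E i \<Longrightarrow> measure M {\<omega> \<in> space M. Y j \<omega> = c} = p"
    and label_other: "\<And>j k. j \<in> nbrs V E i \<Longrightarrow> k \<noteq> c \<Longrightarrow>
                  measure M {\<omega> \<in> space M. Y j \<omega> = k} = (1 - p) / (CARD('c) - 1)"
    and noise: "\<And>j k. j \<in> nbrs V E i \<Longrightarrow> measure M {\<omega> \<in> space M. Y j \<omega> = k} > 0 \<Longrightarrow>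
                  cond_exp_given M (Yhat j) (Y j) k
                    = (1 - \<epsilon>) *\<^sub>R basis_e k + (\<epsilon> / (CARD('c) - 1)) *\<^sub>R (\<Sum>l\<in>UNIV - {k}. basis_e l)"
  shows "(\<integral>\<omega>. mixup V E Yhat i \<omega> \<partial>M)
           = (p * (1 - \<epsilon>) + \<epsilon> * (1 - p) / (CARD('c) - 1)) *\<^sub>R basis_e c
             + ((p * \<epsilon> + (1 - p) * (1 - \<epsilon>)) / (CARD('c) - 1)
                + \<epsilon> * (1 - p) * (CARD('c) - 2) / (CARD('c) - 1)^2) *\<^sub>R (\<Sum>j\<in>UNIV - {c}. basis_e j)
         \<and> (\<forall>t>0. measure M {\<omega> \<in> space M.
                 norm (mixup V E Yhat i \<omega> - (\<integral>\<omega>'. mixup V E Yhat i \<omega>' \<partial>M)) \<ge> t}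
               \<le> 2 * CARD('c) * exp (- (real (deg V E i) * t^2) / (2 * CARD('c))))"
proof -
  interpret prob_space M by (rule P)
  define N where "N = nbrs V E i"
  define n where "n = deg V E i"
  define C where "C = real CARD('c)"
  have C2r: "C \<ge> 2" using C2 unfolding C_def by simp
  have cm1: "real (CARD('c) - 1) = C - 1" using C2 unfolding C_def by (simp add: of_nat_diff)
  have cm2: "real (CARD('c) - 2) = C - 2" using C2 unfolding C_def by (simp add: of_nat_diff)
  have cm1sq: "real ((CARD('c) - 1)^2) = (C - 1)^2" using cm1 by (simp only: of_nat_power)
  have cardc: "real (card (UNIV - {c})) = C - 1"
    using cm1 by (simp add: card_Diff_singleton)
  have NV: "N \<subseteq> V" unfolding N_def nbrs_def by auto
  have finN: "finite N" using finite_subset[OF NV finV] .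
  have ncard: "n = card N" unfolding n_def N_def deg_def by simp
  have npos: "n \<ge> 1" unfolding n_def using deg_pos[OF iV] .
  have Nne: "N \<noteq> {}" using npos ncard by auto
  have rv: "(\<lambda>\<omega>. (Y j \<omega>, Yhat j \<omega>)) \<in> M \<rightarrow>\<^sub>M (count_space UNIV \<Otimes>\<^sub>M borel)" if "j \<in> N" for j
    using indep that unfolding indep_vars_def N_def by auto
  have Ymeas: "Y j \<in> M \<rightarrow>\<^sub>M count_space UNIV" if "j \<in> N" for j
    using measurable_compose[OF rv[OF that] measurable_fst] by simp
  have Yhmeas: "Yhat j \<in> borel_measurable M" if "j \<in> N" for j
    using measurable_compose[OF rv[OF that] measurable_snd] by simp
  have compmeas: "(\<lambda>\<omega>. Yhat j \<omega> $ k) \<in> borel_measurable M" if "j \<in> N" for j k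
    by (rule measurable_compose[OF Yhmeas[OF that]])
       (intro borel_measurable_continuous_onI continuous_intros)
  have bnd: "0 \<le> Yhat j \<omega> $ k \<and> Yhat j \<omega> $ k \<le> 1" if "j \<in> N" "\<omega> \<in> space M" for j \<omega> k
    using Yhat_range[of j \<omega> k] that NV by auto
  have normb: "norm (Yhat j \<omega>) \<le> C" if "j \<in> N" "\<omega> \<in> space M" for j \<omega>
  proof -
    have "norm (Yhat j \<omega>) \<le> (\<Sum>k\<in>UNIV. \<bar>Yhat j \<omega> $ k\<bar>)" by (rule norm_le_l1_cart)
    also have "\<dots> \<le> (\<Sum>k\<in>(UNIV::'c set). 1)" 
      by (intro sum_mono) (use bnd[OF that] in auto)
    finally show ?thesis unfolding C_def by simp
  qed
  have integ: "integrable M (Yhat j)" if "j \<in> N" for j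
    by (rule integrable_const_bound[where B=C]) (use normb[OF that] Yhmeas[OF that] in auto)
  define v :: "'c \<Rightarrow> real ^ 'c" where "v k = (1 - \<epsilon>) *\<^sub>R basis_e k + (\<epsilon> / (CARD('c) - 1)) *\<^sub>R (\<Sum>l\<in>UNIV - {k}. basis_e l)" for k
  define m :: "'c \<Rightarrow> real" where "m k = (if k = c then p else (1 - p) / (C - 1))" for k
  have Smeas: "{\<omega> \<in> space M. Y j \<omega> = k} \<in> sets M" if "j \<in> N" for j k
    using Ymeas[OF that] by measurable
  have Eyhat: "integral\<^sup>L M (Yhat j) = (\<Sum>k\<in>UNIV. m k *\<^sub>R v k)" if jN: "j \<in> N" for j
  proof -
    have "integral\<^sup>L M (Yhat j) = integral\<^sup>L M (\<lambda>\<omega>. \<Sum>k\<in>UNIV. indicator {\<omega> \<in> space M. Y j \<omega> = k} \<omega> *\<^sub>R Yhat j \<omega>)"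
    proof (rule Bochner_Integration.integral_cong[OF refl])
      fix \<omega> assume "\<omega> \<in> space M"
      then have "(\<Sum>k\<in>UNIV. indicator {\<omega> \<in> space M. Y j \<omega> = k} \<omega> :: real) = 1"
        by (simp add: indicator_def)
      then show "Yhat j \<omega> = (\<Sum>k\<in>UNIV. indicator {\<omega> \<in> space M. Y j \<omega> = k} \<omega> *\<^sub>R Yhat j \<omega>)"
        by (simp add: scaleR_sum_left[symmetric])
    qed
    also have "\<dots> = (\<Sum>k\<in>UNIV. integral\<^sup>L M (\<lambda>\<omega>. indicator {\<omega> \<in> space M. Y j \<omega> = k} \<omega> *\<^sub>R Yhat j \<omega>))"
      by (intro Bochner_Integration.integral_sum integrable_mult_indicator Smeas[OF jN] integ[OF jN])
    also have "\<dots> = (\<Sum>k\<in>UNIV. m k *\<^sub>R v k)"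
    proof (intro sum.cong refl)
      fix k
      let ?S = "{\<omega> \<in> space M. Y j \<omega> = k}"
      have mk: "measure M ?S = m k"
        using label_same[of j] label_other[of j k] jN cm1 unfolding m_def N_def by auto
      show "integral\<^sup>L M (\<lambda>\<omega>. indicator ?S \<omega> *\<^sub>R Yhat j \<omega>) = m k *\<^sub>R v k"
      proof (cases "measure M ?S > 0")
        case True
        have "cond_exp_given M (Yhat j) (Y j) k = v k"
          using noise[of j k] True jN unfolding v_def N_def by simp
        then show ?thesis using True mk unfolding cond_exp_given_def
          by (metis (no_types, lifting) divide_cancel_left mult_cancel_left1 nonzero_divide_eq_eq
              order_less_irrefl scaleR_one scaleR_scaleR)
      next
        case False
        then have m0: "measure M ?S = 0" using measure_nonneg[of M ?S] by linarith
        then have "?S \<in> null_sets M" using Smeas[OF jN]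
          by (simp add: emeasure_eq_measure null_sets_def)
        then have "AE \<omega> in M. \<omega> \<notin> ?S" by (rule AE_not_in)
        then have "integral\<^sup>L M (\<lambda>\<omega>. indicator ?S \<omega> *\<^sub>R Yhat j \<omega>) = 0"
          by (intro integral_eq_zero_AE) (auto elim: eventually_mono)
        then show ?thesis using m0 mk by simp
      qed
    qed
    finally show ?thesis .
  qed
  define W where "W = (\<Sum>k\<in>UNIV. m k *\<^sub>R v k)"
  have summ: "(\<Sum>k\<in>UNIV. m k) = 1"
  proof -
    have "(\<Sum>k\<in>UNIV. m k) = m c + (\<Sum>k\<in>UNIV - {c}. m k)"
      by (simp add: sum.remove)
    also have "(\<Sum>k\<in>UNIV - {c}. m k) = (\<Sum>k\<in>UNIV - {c}. (1 - p) / (C - 1))"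
      by (intro sum.cong) (auto simp: m_def)
    also have "\<dots> = 1 - p" using cardc C2r by simp
    finally show ?thesis by (simp add: m_def)
  qed
  have Wcomp: "W $ l = \<epsilon> / (C - 1) + m l * (1 - \<epsilon> - \<epsilon> / (C - 1))" for l
  proof -
    have vl: "v k $ l = \<epsilon> / (C - 1) + (if k = l then 1 - \<epsilon> - \<epsilon> / (C - 1) else 0)" for k
      unfolding v_def basis_e_def using cm1 by (auto simp: axis_def sum.remove)
    have "W $ l = (\<Sum>k\<in>UNIV. m k * (\<epsilon> / (C - 1)) + (if k = l then m l * (1 - \<epsilon> - \<epsilon> / (C - 1)) else 0))"
      unfolding W_def by (auto simp: vl ring_distribs intro!: sum.cong)
    also have "\<dots> = (\<Sum>k\<in>UNIV. m k) * (\<epsilon> / (C - 1)) + m l * (1 - \<epsilon> - \<epsilon> / (C - 1))"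
      by (simp add: sum.distrib sum_distrib_right sum_divide_distrib)
    finally show ?thesis using summ by simp
  qed
  have Wtarget: "W = (p * (1 - \<epsilon>) + \<epsilon> * (1 - p) / (CARD('c) - 1)) *\<^sub>R basis_e c
             + ((p * \<epsilon> + (1 - p) * (1 - \<epsilon>)) / (CARD('c) - 1)
                + \<epsilon> * (1 - p) * (CARD('c) - 2) / (CARD('c) - 1)^2) *\<^sub>R (\<Sum>j\<in>UNIV - {c}. basis_e j)" (is "_ = ?R")
  unfolding vec_eq_iff
  proof (intro allI)
    fix l
    have C1: "C - 1 \<noteq> 0" using C2r by simp
    have sb: "(\<Sum>j\<in>UNIV - {c}. basis_e j) $ l = (if l = c then 0 else 1)"
      by (simp add: basis_e_def axis_def)
    have sb': "(\<Sum>x\<in>UNIV - {c}. basis_e x $ l) = (if l = c then 0 else 1)"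
      by (simp add: basis_e_def axis_def)
    have bc: "basis_e c $ l = (if l = c then 1 else 0)"
      by (simp add: basis_e_def axis_def)
    have Rl: "?R $ l = (if l = c then (p * (1 - \<epsilon>) + \<epsilon> * (1 - p) / (C - 1))
               else ((p * \<epsilon> + (1 - p) * (1 - \<epsilon>)) / (C - 1)
                + \<epsilon> * (1 - p) * (C - 2) / (C - 1)^2))"
      by (simp add: sb sb' bc cm1 cm2 cm1sq C_def[symmetric])
    show "W $ l = ?R $ l"
    proof (cases "l = c")
      case True
      have "W $ l = \<epsilon> / (C - 1) + p * (1 - \<epsilon> - \<epsilon> / (C - 1))"
        using True Wcomp[of l] m_def by simp
      also have "\<dots> = p * (1 - \<epsilon>) + \<epsilon> * (1 - p) / (C - 1)"
        using aux1[OF C1] by simp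
      also have "\<dots> = ?R $ l" unfolding Rl using True by simp
      finally show ?thesis .
    next
      case False
      have "W $ l = \<epsilon> / (C - 1) + (1 - p) / (C - 1) * (1 - \<epsilon> - \<epsilon> / (C - 1))"
        using False Wcomp[of l] m_def by simp
      also have "\<dots> = (p * \<epsilon> + (1 - p) * (1 - \<epsilon>)) / (C - 1)
                + \<epsilon> * (1 - p) * (C - 2) / (C - 1)^2"
        using aux2[OF C1, of \<epsilon> p] by (simp add: algebra_simps)
      also have "\<dots> = ?R $ l" unfolding Rl using False by simp
      finally show ?thesis .
    qed
  qed
  have Emix: "(\<integral>\<omega>. mixup V E Yhat i \<omega> \<partial>M) = W"
  proof -
    have "(\<integral>\<omega>. mixup V E Yhat i \<omega> \<partial>M) = (\<Sum>j\<in>N. (1 / real n) *\<^sub>R integral\<^sup>L M (Yhat j))"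
      unfolding mixup_def N_def[symmetric] n_def[symmetric]
      by (subst Bochner_Integration.integral_sum) (auto intro: integ)
    also have "\<dots> = (\<Sum>j\<in>N. (1 / real n) *\<^sub>R W)" using Eyhat W_def by simp
    also have "\<dots> = real (card N) *\<^sub>R ((1 / real n) *\<^sub>R W)" by (rule sum_constant_scaleR)
    also have "\<dots> = W" using ncard npos by simp
    finally show ?thesis .
  qed
  have conc: "measure M {\<omega> \<in> space M. norm (mixup V E Yhat i \<omega> - W) \<ge> t}
     \<le> 2 * C * exp (- (real n * t^2) / (2 * C))" if t: "t > 0" for t
  proof -
    define s where "s = t / sqrt C"
    have Cpos: "C > 0" using C2r by simp
    have spos: "s > 0" using t Cpos unfolding s_def by simp
    have s2: "s^2 = t^2 / C" unfolding s_def using Cpos by (simp add: power_divide)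
    have nr: "real n > 0" using npos by simp
    define B where "B k = {\<omega> \<in> space M. real n * s \<le> \<bar>(\<Sum>j\<in>N. Yhat j \<omega> $ k) - real n * W $ k\<bar>}" for k
    have mixk: "mixup V E Yhat i \<omega> $ k = 1 / real n * (\<Sum>j\<in>N. Yhat j \<omega> $ k)" for \<omega> k
      unfolding mixup_def N_def[symmetric] n_def[symmetric] by (simp add: sum_distrib_left)
    have sub: "{\<omega> \<in> space M. norm (mixup V E Yhat i \<omega> - W) \<ge> t} \<subseteq> (\<Union>k\<in>UNIV. B k)"
    proof
      fix \<omega> assume om: "\<omega> \<in> {\<omega> \<in> space M. norm (mixup V E Yhat i \<omega> - W) \<ge> t}"
      show "\<omega> \<in> (\<Union>k\<in>UNIV. B k)"
      proof (rule ccontr)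
        assume nB: "\<omega> \<notin> (\<Union>k\<in>UNIV. B k)"
        have lt: "\<bar>(mixup V E Yhat i \<omega> - W) $ k\<bar> < s" for k
        proof -
          from nB om have "\<bar>(\<Sum>j\<in>N. Yhat j \<omega> $ k) - real n * W $ k\<bar> < real n * s"
            unfolding B_def by (auto simp: not_le)
          from aux3[OF nr this] show ?thesis by (simp add: mixk)
        qed
        have "norm (mixup V E Yhat i \<omega> - W) < s * sqrt (real CARD('c))" by (rule norm_lt_cart[OF lt])
        also have "\<dots> = t" unfolding s_def C_def by simp
        finally show False using om by auto
      qed
    qed
    have summeas [measurable]: "(\<lambda>\<omega>. \<Sum>j\<in>N. Yhat j \<omega> $ k) \<in> borel_measurable M" for k
      by (rule borel_measurable_sum) (rule compmeas)
    have Bmeas: "B k \<in> sets M" for k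
      unfolding B_def by measurable
    have indep': "indep_vars (\<lambda>_. count_space UNIV \<Otimes>\<^sub>M borel) (\<lambda>j \<omega>. (Y j \<omega>, Yhat j \<omega>)) N"
      using indep unfolding N_def .
    have Hk: "measure M (B k) \<le> 2 * exp (-2 * real n * s^2)" for k
    proof -
      have sndk: "(\<lambda>x. snd x $ k) \<in> (count_space UNIV \<Otimes>\<^sub>M borel) \<rightarrow>\<^sub>M (borel :: real measure)"
        by (rule measurable_compose[OF measurable_snd])
           (intro borel_measurable_continuous_onI continuous_intros)
      have indk: "indep_vars (\<lambda>_. borel) (\<lambda>j \<omega>. Yhat j \<omega> $ k) N"
        using indep_vars_compose2[OF indep', of "\<lambda>j x. snd x $ k" "\<lambda>_. borel"] sndk by simp
      have AEk: "AE \<omega> in M. Yhat j \<omega> $ k \<in> {0..1}" if "j \<in> N" for j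
        using bnd[OF that] by (intro AE_I2) auto
      have ek: "expectation (\<lambda>\<omega>. Yhat j \<omega> $ k) = W $ k" if "j \<in> N" for j
        using integral_bounded_linear[OF bounded_linear_vec_nth integ[OF that], of k] Eyhat[OF that]
        unfolding W_def by simp
      have mu: "real n * W $ k = (\<Sum>j\<in>N. expectation (\<lambda>\<omega>. Yhat j \<omega> $ k))"
        using ek ncard by simp
      interpret H: Hoeffding_ineq M N "\<lambda>j \<omega>. Yhat j \<omega> $ k" "\<lambda>_. 0" "\<lambda>_. 1" "real n * W $ k"
        by unfold_locales (use finN indk AEk mu in auto)
      have "measure M (B k) \<le> 2 * exp (-2 * (real n * s)^2 / (\<Sum>j\<in>N. (1 - 0)^2))"
        unfolding B_def
        by (rule H.Hoeffding_ineq_abs_ge) (use spos nr ncard in auto)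
      also have "(\<Sum>j\<in>N. ((1::real) - 0)^2) = real n" using ncard by simp
      also have "-2 * (real n * s)^2 / real n = -2 * real n * s^2"
        using nr by (simp add: power2_eq_square)
      finally show ?thesis .
    qed
    have "measure M {\<omega> \<in> space M. norm (mixup V E Yhat i \<omega> - W) \<ge> t} \<le> measure M (\<Union>k\<in>UNIV. B k)"
      by (rule finite_measure_mono[OF sub]) (use Bmeas in auto)
    also have "\<dots> \<le> (\<Sum>k\<in>UNIV. measure M (B k))"
      by (rule measure_UNION_le) (use Bmeas in auto)
    also have "\<dots> \<le> (\<Sum>k\<in>(UNIV::'c set). 2 * exp (-2 * real n * s^2))"
      by (rule sum_mono) (rule Hk)
    also have "\<dots> = C * (2 * exp (-2 * (real n * t^2) / C))"
      unfolding C_def s2 by (simp add: C_def)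
    also have "\<dots> \<le> C * (2 * exp (- (real n * t^2) / (2 * C)))"
      using Cpos aux4[of "real n * t^2" C] by (intro mult_left_mono) auto
    finally show ?thesis by simp
  qed
  show ?thesis
    apply (intro conjI allI impI)
    subgoal unfolding Emix by (rule Wtarget)
    subgoal for t using conc[of t] unfolding Emix n_def C_def by simp
    done

qed

end
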